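(* Let $G$ be a finite nonabelian group having a self-normalising subgroup $S$ (i.e. $N_G(S)=S$) of index $[G:S]=4$. Then $\beta(G)\ge \frac{3}{2}|G|$.
   Context: For a nonempty subset $X$ of a group $G$, $Q(X):=\{xy^{-1}: x,y\in X\}$. Nonempty subsets $S_1,S_2,S_3$ of $G$ satisfy the Triple Product Property (TPP) if for all $s_i\in Q(S_i)$: $s_1s_2s_3=1$ iff $s_1=s_2=s_3=1$. A group $G$ realizes $\langle n,p,m\rangle$ if there are subsets $S_1,S_2,S_3\subseteq G$ with $|S_1|=n$, $|S_2|=p$, $|S_3|=m$ satisfying the TPP. For a nontrivial finite group $G$, the TPP capacity is $\beta(G):=\max\{npm : G \text{ realizes } \langle n,p,m\rangle\}$. *)

theory Defs
  imports "HOL-Algebra.Algebra"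
begin

definition quotient_set :: "('a, 'b) monoid_scheme \<Rightarrow> 'a set \<Rightarrow> 'a set" where
  "quotient_set G A = {monoid.mult G x (m_inv G y) | x y. x \<in> A \<and> y \<in> A}"

definition TPP :: "('a, 'b) monoid_scheme \<Rightarrow> 'a set \<Rightarrow> 'a set \<Rightarrow> 'a set \<Rightarrow> bool" where
  "TPP G S1 S2 S3 \<longleftrightarrow>
     S1 \<subseteq> carrier G \<and> S2 \<subseteq> carrier G \<and> S3 \<subseteq> carrier G \<and>
     S1 \<noteq> {} \<and> S2 \<noteq> {} \<and> S3 \<noteq> {} \<and>
     (\<forall>s1 \<in> quotient_set G S1. \<forall>s2 \<in> quotient_set G S2. \<forall>s3 \<in> quotient_set G S3.
        (monoid.mult G (monoid.mult G s1 s2) s3 = one G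
          \<longleftrightarrow> s1 = one G \<and> s2 = one G \<and> s3 = one G))"

definition realizes :: "('a, 'b) monoid_scheme \<Rightarrow> nat \<Rightarrow> nat \<Rightarrow> nat \<Rightarrow> bool" where
  "realizes G n p m \<longleftrightarrow>
     (\<exists>S1 S2 S3. TPP G S1 S2 S3 \<and> card S1 = n \<and> card S2 = p \<and> card S3 = m)"

definition TPP_capacity :: "('a, 'b) monoid_scheme \<Rightarrow> nat" where
  "TPP_capacity G = Max {n * p * m | n p m. realizes G n p m}"

end

theory Submission
  imports Defs
begin

locale tctx = group G for G (structure) +
  fixes S
  assumes sub: "subgroup S G"
    and fin: "finite (carrier G)"
    and nrm: "normalizer G S = S"
    and c4: "card (rcosets S) = 4"
begin

lemma Ssub: "S \<subseteq> carrier G" by (rule subgroup.subset[OF sub])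

lemma Sinv: "s \<in> S \<Longrightarrow> inv s \<in> S" by (rule subgroup.m_inv_closed[OF sub])
lemma Smul: "s \<in> S \<Longrightarrow> s' \<in> S \<Longrightarrow> s \<otimes> s' \<in> S" by (rule subgroup.m_closed[OF sub])
lemma Sone: "\<one> \<in> S" by (rule subgroup.one_closed[OF sub])
lemma Sc: "s \<in> S \<Longrightarrow> s \<in> carrier G" using Ssub by blast

lemma Peq: "x \<in> carrier G \<Longrightarrow> y \<in> carrier G \<Longrightarrow> (S #> x = S #> y) = (x \<otimes> inv y \<in> S)"
  by (metis Ssub coset_join1 coset_join2 coset_mult_inv1 coset_mult_inv2 inv_closed m_closed sub)

lemma Pmult: "x \<in> carrier G \<Longrightarrow> y \<in> carrier G \<Longrightarrow> z \<in> carrier G \<Longrightarrow> S #> x = S #> y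
  \<Longrightarrow> S #> (x \<otimes> z) = S #> (y \<otimes> z)"
  by (metis Ssub coset_mult_assoc)

lemma Pcancel: "x \<in> carrier G \<Longrightarrow> y \<in> carrier G \<Longrightarrow> z \<in> carrier G \<Longrightarrow> S #> (x \<otimes> z) = S #> (y \<otimes> z)
  \<Longrightarrow> S #> x = S #> y"
  using Pmult[of "x \<otimes> z" "y \<otimes> z" "inv z"] by (simp add: m_assoc)

lemma P1: "x \<in> carrier G \<Longrightarrow> (S #> x = S) = (x \<in> S)"
  by (metis coset_join1 coset_join2 sub)

lemma Pone: "S #> \<one> = S" using Ssub by simp

lemma notS_mult: "x \<in> carrier G \<Longrightarrow> x \<notin> S \<Longrightarrow> s \<in> S \<Longrightarrow> x \<otimes> s \<notin> S"
proof
  assume a: "x \<in> carrier G" "x \<notin> S" "s \<in> S" "x \<otimes> s \<in> S"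
  have sc: "s \<in> carrier G" using a Ssub by auto
  have "inv s \<in> S" using Sinv a(3) .
  hence "x \<otimes> s \<otimes> inv s \<in> S" using Smul a(4) by blast
  moreover have "x \<otimes> s \<otimes> inv s = x" using a sc by (simp add: m_assoc)
  ultimately show False using a by simp
qed

lemma nofix:
  assumes x: "x \<in> carrier G" and fx: "\<forall>s\<in>S. S #> (x \<otimes> s) = S #> x"
  shows "x \<in> S"
proof -
  have in1: "x \<otimes> s \<otimes> inv x \<in> S" if "s \<in> S" for s
    using fx that Peq[of "x \<otimes> s" x] x Ssub by auto
  have eq: "x <# S #> inv x = (\<lambda>s. x \<otimes> s \<otimes> inv x) ` S"
    unfolding l_coset_def r_coset_def by auto
  have inj: "inj_on (\<lambda>s. x \<otimes> s \<otimes> inv x) S"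
    proof (rule inj_onI)
    fix s1 s2
    assume h: "s1 \<in> S" "s2 \<in> S" "x \<otimes> s1 \<otimes> inv x = x \<otimes> s2 \<otimes> inv x"
    have c: "s1 \<in> carrier G" "s2 \<in> carrier G" using h Ssub by auto
    have "x \<otimes> s1 = x \<otimes> s2" using h(3) r_cancel[of "inv x" "x \<otimes> s1" "x \<otimes> s2"] x c by simp
    thus "s1 = s2" using l_cancel[of x s1 s2] x c by simp
  qed
  have fS: "finite S" using fin Ssub finite_subset by blast
  have "(\<lambda>s. x \<otimes> s \<otimes> inv x) ` S = S"
    by (rule card_subset_eq[OF fS]) (use in1 inj card_image in auto)
  hence "x <# S #> inv x = S" using eq by simp
  hence "x \<in> normalizer G S" unfolding normalizer_def stabilizer_def using x Ssub by auto
  thus ?thesis using nrm by simp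
qed

lemma finR: "finite (rcosets S)" using c4 card_ge_0_finite by force

lemma Pin: "x \<in> carrier G \<Longrightarrow> S #> x \<in> rcosets S" using rcosetsI Ssub by blast

lemma fourth:
  assumes a: "a \<in> carrier G" "b \<in> carrier G" "S #> a \<noteq> S" "S #> b \<noteq> S" "S #> a \<noteq> S #> b"
  shows "\<exists>c\<in>carrier G. S #> c \<noteq> S \<and> S #> c \<noteq> S #> a \<and> S #> c \<noteq> S #> b"
proof -
  have SR: "S \<in> rcosets S" using Pin[of \<one>] Pone by simp
  have sub3: "{S, S #> a, S #> b} \<subseteq> rcosets S" using Pin a SR by simp
  have "card {S, S #> a, S #> b} = 3" using a by simp
  hence "{S, S #> a, S #> b} \<noteq> rcosets S" using c4 by auto
  then obtain Y where YY: "Y \<in> rcosets S" "Y \<notin> {S, S #> a, S #> b}" using sub3 by blast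
  then obtain c where "c \<in> carrier G" "Y = S #> c" unfolding RCOSETS_def by auto
  thus ?thesis using YY by auto
qed

lemma allfour:
  assumes a: "a \<in> carrier G" "b \<in> carrier G" "c \<in> carrier G" "S #> a \<noteq> S" "S #> b \<noteq> S" "S #> a \<noteq> S #> b"
     "S #> c \<noteq> S" "S #> c \<noteq> S #> a" "S #> c \<noteq> S #> b" and x: "x \<in> carrier G"
  shows "S #> x \<in> {S, S #> a, S #> b, S #> c}"
proof -
  have SR: "S \<in> rcosets S" using Pin[of \<one>] Pone by simp
  have sub4: "{S, S #> a, S #> b, S #> c} \<subseteq> rcosets S" using Pin a SR by simp
  have "card {S, S #> a, S #> b, S #> c} = 4" using a by simp
  hence "{S, S #> a, S #> b, S #> c} = rcosets S" using c4 card_subset_eq[OF finR sub4] by simp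
  thus ?thesis using Pin[OF x] by simp
qed

lemma trans:
  assumes x: "x \<in> carrier G" "x \<notin> S" and y: "y \<in> carrier G" "y \<notin> S"
  shows "\<exists>s\<in>S. S #> (x \<otimes> s) = S #> y"
proof (rule ccontr)
  assume no: "\<not> ?thesis"
  have Px: "S #> x \<noteq> S" "S #> y \<noteq> S" using P1 x y by auto
  have xy: "S #> x \<noteq> S #> y" using no Pone Sone x by force
  obtain z where z: "z \<in> carrier G" "S #> z \<noteq> S" "S #> z \<noteq> S #> x" "S #> z \<noteq> S #> y"
    using fourth[OF x(1) y(1) Px xy] by blast
  have all: "S #> w \<in> {S, S #> x, S #> y, S #> z}" if "w \<in> carrier G" for w
    using allfour[OF x(1) y(1) z(1) Px xy z(2-4) that] .
  obtain s1 where s1: "s1 \<in> S" "S #> (y \<otimes> s1) \<noteq> S #> y" using nofix y by blast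
  have s1c: "s1 \<in> carrier G" using s1 Ssub by auto
  have ns: "S #> (y \<otimes> s1) \<noteq> S" using P1 notS_mult y s1 s1c by auto
  have c1: "S #> (y \<otimes> s1) \<noteq> S #> x"
  proof
    assume "S #> (y \<otimes> s1) = S #> x"
    hence "S #> (y \<otimes> s1 \<otimes> inv s1) = S #> (x \<otimes> inv s1)" using Pmult[of "y \<otimes> s1" x "inv s1"] y s1c x by simp
    hence "S #> (x \<otimes> inv s1) = S #> y" using y s1c by (simp add: m_assoc)
    moreover have "inv s1 \<in> S" using Sinv s1(1) .
    ultimately show False using no by blast
  qed
  hence yz: "S #> (y \<otimes> s1) = S #> z" using all[of "y \<otimes> s1"] y s1c ns s1 by auto
  obtain s0 where s0: "s0 \<in> S" "S #> (x \<otimes> s0) \<noteq> S #> x" using nofix x by blast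
  have s0c: "s0 \<in> carrier G" using s0 Ssub by auto
  have "S #> (x \<otimes> s0) \<noteq> S" using P1 notS_mult x s0 s0c by auto
  moreover have "S #> (x \<otimes> s0) \<noteq> S #> y" using no s0 by blast
  ultimately have xz: "S #> (x \<otimes> s0) = S #> z" using all[of "x \<otimes> s0"] x s0c s0 by auto
  have "S #> (x \<otimes> s0 \<otimes> inv s1) = S #> (y \<otimes> s1 \<otimes> inv s1)" using Pmult[of "x \<otimes> s0" "y \<otimes> s1" "inv s1"] xz yz x y s0c s1c by simp
  hence "S #> (x \<otimes> (s0 \<otimes> inv s1)) = S #> y" using x y s0c s1c by (simp add: m_assoc)
  moreover have "s0 \<otimes> inv s1 \<in> S" using Smul[OF s0(1) Sinv[OF s1(1)]] .
  ultimately show False using no by blast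
qed

lemma exists_a: "\<exists>a\<in>carrier G. a \<notin> S"
proof -
  have SR: "S \<in> rcosets S" using Pin[of \<one>] Pone by simp
  have "rcosets S \<noteq> {S}" using c4 by auto
  then obtain Y where "Y \<in> rcosets S" "Y \<noteq> S" using SR by blast
  then obtain a where "a \<in> carrier G" "Y = S #> a" unfolding RCOSETS_def by auto
  thus ?thesis using P1 \<open>Y \<noteq> S\<close> by auto
qed

lemma three_cycle:
  "\<exists>a u. a \<in> carrier G \<and> a \<notin> S \<and> u \<in> S \<and> S #> a \<noteq> S #> (a \<otimes> u)
     \<and> S #> a \<noteq> S #> (a \<otimes> (u \<otimes> u)) \<and> S #> (a \<otimes> u) \<noteq> S #> (a \<otimes> (u \<otimes> u))"
proof -
  obtain a where a: "a \<in> carrier G" "a \<notin> S" using exists_a by blast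
  obtain s where s: "s \<in> S" "S #> (a \<otimes> s) \<noteq> S #> a" using nofix a by blast
  have sc: "s \<in> carrier G" using s Ssub by auto
  define b where "b = a \<otimes> s"
  have b: "b \<in> carrier G" "b \<notin> S" using a s sc notS_mult b_def by auto
  have PbP: "S #> b \<noteq> S #> a" using s b_def by simp
  have ass: "a \<otimes> (s \<otimes> s) = b \<otimes> s" using a sc b_def by (simp add: m_assoc)
  show ?thesis
  proof (cases "S #> (b \<otimes> s) = S #> a")
    case False
    have "S #> (a \<otimes> s) \<noteq> S #> (b \<otimes> s)"
    proof
      assume "S #> (a \<otimes> s) = S #> (b \<otimes> s)"
      hence "S #> a = S #> b" using Pcancel[of a b s] a b sc by simp
      thus False using PbP by simp
    qed
    hence "S #> (a \<otimes> s) \<noteq> S #> (a \<otimes> (s \<otimes> s))" using ass by simp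
    moreover have "S #> a \<noteq> S #> (a \<otimes> (s \<otimes> s))" using False ass by simp
    ultimately show ?thesis using a s by blast
  next
    case True
    have Pa: "S #> a \<noteq> S" "S #> b \<noteq> S" using P1 a b by auto
    obtain c where c: "c \<in> carrier G" "S #> c \<noteq> S" "S #> c \<noteq> S #> a" "S #> c \<noteq> S #> b"
      using fourth[OF a(1) b(1) Pa PbP[symmetric]] by blast
    have cS: "c \<notin> S" using P1 c by auto
    obtain s' where s': "s' \<in> S" "S #> (b \<otimes> s') = S #> c" using trans[OF b c(1) cS] by blast
    have s'c: "s' \<in> carrier G" using s' Ssub by auto
    show ?thesis
    proof (cases "S #> (c \<otimes> s') = S #> b")
      case False
      have e1: "S #> (b \<otimes> (s' \<otimes> s')) = S #> (c \<otimes> s')"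
        using Pmult[OF _ c(1) s'c s'(2)] b s'c by (simp add: m_assoc)
      have "S #> (b \<otimes> s') \<noteq> S #> (b \<otimes> (s' \<otimes> s'))"
      proof
        assume "S #> (b \<otimes> s') = S #> (b \<otimes> (s' \<otimes> s'))"
        hence "S #> (b \<otimes> s') = S #> (b \<otimes> s' \<otimes> s')" using b s'c by (simp add: m_assoc)
        hence "S #> b = S #> (b \<otimes> s')" using Pcancel[of b "b \<otimes> s'" s'] b s'c by simp
        thus False using s' c by simp
      qed
      moreover have "S #> b \<noteq> S #> (b \<otimes> s')" using s' c by simp
      moreover have "S #> b \<noteq> S #> (b \<otimes> (s' \<otimes> s'))" using False e1 by simp
      ultimately show ?thesis using b s' by blast
    next
      case True
      have all: "S #> w \<in> {S, S #> a, S #> b, S #> c}" if "w \<in> carrier G" for w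
        using allfour[OF a(1) b(1) c(1) Pa PbP[symmetric] c(2-4) that] .
      have "S #> (c \<otimes> s) \<noteq> S" using P1 notS_mult c cS s sc by auto
      moreover have "S #> (c \<otimes> s) \<noteq> S #> a"
      proof
        assume "S #> (c \<otimes> s) = S #> a"
        hence "S #> (c \<otimes> s) = S #> (b \<otimes> s)" using \<open>S #> (b \<otimes> s) = S #> a\<close> by simp
        hence "S #> c = S #> b" using Pcancel[of c b s] c b sc by simp
        thus False using c by simp
      qed
      moreover have "S #> (c \<otimes> s) \<noteq> S #> b"
      proof
        assume "S #> (c \<otimes> s) = S #> b"
        hence "S #> (c \<otimes> s) = S #> (a \<otimes> s)" using b_def by simp
        hence "S #> c = S #> a" using Pcancel[of c a s] c a sc by simp
        thus False using c by simp
      qed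
      ultimately have cs: "S #> (c \<otimes> s) = S #> c" using all[of "c \<otimes> s"] c sc by auto
      define u where "u = s \<otimes> s'"
      have u: "u \<in> S" unfolding u_def using Smul s(1) s'(1) .
      have uc: "u \<in> carrier G" using sc s'c u_def by simp
      have au: "S #> (a \<otimes> u) = S #> c" using s' b_def a sc s'c u_def by (simp add: m_assoc)
      have "S #> (a \<otimes> u \<otimes> u) = S #> (c \<otimes> u)" using Pmult[OF _ c(1) uc au] a uc by simp
      also have "\<dots> = S #> (c \<otimes> s \<otimes> s')" using c sc s'c u_def by (simp add: m_assoc)
      also have "\<dots> = S #> (c \<otimes> s')" using Pmult[OF _ c(1) s'c cs] c sc by simp
      finally have auu: "S #> (a \<otimes> (u \<otimes> u)) = S #> b" using True a uc by (simp add: m_assoc)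
      show ?thesis using a u
        by (intro exI[of _ a] exI[of _ u]) (simp add: au auu c(3)[symmetric] c(4) PbP[symmetric])
    qed
  qed
qed

lemma swap_el:
  assumes a: "a \<in> carrier G" "a \<notin> S"
  shows "\<exists>t\<in>carrier G. S #> (a \<otimes> t) = S \<and> S #> t = S #> a"
proof -
  have ia1: "inv a \<in> carrier G" using a by simp
  have ia2: "inv a \<notin> S"
  proof
    assume "inv a \<in> S"
    hence "inv (inv a) \<in> S" by (rule Sinv)
    thus False using a by simp
  qed
  note ia = ia1 ia2
  obtain s where s: "s \<in> S" "S #> (inv a \<otimes> s) = S #> a" using trans[OF ia a] by blast
  have sc: "s \<in> carrier G" using s Ssub by auto
  have "S #> (a \<otimes> (inv a \<otimes> s)) = S" using a sc s P1 by (simp add: m_assoc[symmetric])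
  moreover have "inv a \<otimes> s \<in> carrier G" using ia sc by simp
  ultimately show ?thesis using s(2) by blast
qed

lemma tpp_main:
  assumes a: "a \<in> carrier G" "a \<notin> S" and u: "u \<in> S"
    and d1: "S #> a \<noteq> S #> (a \<otimes> u)" and d2: "S #> a \<noteq> S #> (a \<otimes> (u \<otimes> u))"
    and d3: "S #> (a \<otimes> u) \<noteq> S #> (a \<otimes> (u \<otimes> u))"
    and t: "t \<in> carrier G" "S #> (a \<otimes> t) = S" "S #> t = S #> a"
  defines "H \<equiv> {x \<in> carrier G. S #> (a \<otimes> x) = S #> a}"
  shows "TPP G H {\<one>, t} {\<one>, u, u \<otimes> u}"
proof -
  have uc: "u \<in> carrier G" using u Ssub by auto
  have Pa: "S #> a \<noteq> S" using P1 a by auto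
  have Hc: "H \<subseteq> carrier G" unfolding H_def by auto
  have oneH: "\<one> \<in> H" unfolding H_def using a by simp
  have U: "{\<one>, u, u \<otimes> u} \<subseteq> S" using u Sone Smul[OF u u] by simp
  have Uc: "{\<one>, u, u \<otimes> u} \<subseteq> carrier G" using U Ssub by auto
  have Uinj: "y = w" if "y \<in> {\<one>, u, u \<otimes> u}" "w \<in> {\<one>, u, u \<otimes> u}" "S #> (a \<otimes> y) = S #> (a \<otimes> w)" for y w
  proof -
    have e: "S #> (a \<otimes> \<one>) = S #> a" using a by simp
    from that(1,2) show ?thesis
      by (elim insertE emptyE) (use that(3) d1 d2 d3 e in simp_all)
  qed
  have core: "s1 = \<one> \<and> s2 = \<one> \<and> s3 = \<one>"
    if s1: "s1 \<in> quotient_set G H" and s2: "s2 \<in> quotient_set G {\<one>, t}"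
      and s3: "s3 \<in> quotient_set G {\<one>, u, u \<otimes> u}" and eq: "s1 \<otimes> s2 \<otimes> s3 = \<one>" for s1 s2 s3
  proof -
    obtain x1 z1 where xz1: "s1 = x1 \<otimes> inv z1" "x1 \<in> H" "z1 \<in> H" using s1 unfolding quotient_set_def by auto
    obtain x2 z2 where xz2: "s2 = x2 \<otimes> inv z2" "x2 \<in> {\<one>, t}" "z2 \<in> {\<one>, t}" using s2 unfolding quotient_set_def by auto
    obtain y w where yw: "s3 = y \<otimes> inv w" "y \<in> {\<one>, u, u \<otimes> u}" "w \<in> {\<one>, u, u \<otimes> u}" using s3 unfolding quotient_set_def by auto
    have x1c: "x1 \<in> carrier G" "z1 \<in> carrier G" using xz1 Hc by auto
    have x2c: "x2 \<in> carrier G" "z2 \<in> carrier G" using xz2 t by auto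
    have yc: "y \<in> carrier G" "w \<in> carrier G" using yw Uc by auto
    have c1: "s1 \<in> carrier G" "s2 \<in> carrier G" "s3 \<in> carrier G" using xz1 xz2 yw x1c x2c yc by auto
    have "S #> (a \<otimes> x1) = S #> (a \<otimes> z1)" using xz1 unfolding H_def by auto
    hence "S #> (a \<otimes> x1 \<otimes> inv z1) = S #> (a \<otimes> z1 \<otimes> inv z1)" using Pmult[of "a \<otimes> x1" "a \<otimes> z1" "inv z1"] a x1c by simp
    hence Ps1: "S #> (a \<otimes> s1) = S #> a" using xz1 a x1c by (simp add: m_assoc)
    hence "S #> (a \<otimes> s1 \<otimes> inv s1) = S #> (a \<otimes> inv s1)" using Pmult[of "a \<otimes> s1" a "inv s1"] a c1 by simp
    hence Pis1: "S #> (a \<otimes> inv s1) = S #> a" using a c1 by (simp add: m_assoc)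
    have "s2 \<otimes> s3 = inv s1" proof -
      have "s1 \<otimes> (s2 \<otimes> s3) = \<one>" using eq c1 by (simp add: m_assoc)
      hence "inv (s2 \<otimes> s3) = s1" using inv_equality[of s1 "s2 \<otimes> s3"] c1 by simp
      hence "inv s1 = inv (inv (s2 \<otimes> s3))" by simp
      thus ?thesis using c1 by simp
    qed
    hence P23: "S #> (a \<otimes> s2 \<otimes> s3) = S #> a" using Pis1 a c1 by (simp add: m_assoc)
    show ?thesis
    proof (cases "x2 = z2")
      case True
      hence s2one: "s2 = \<one>" using xz2 x2c by simp
      hence "S #> (a \<otimes> y \<otimes> inv w) = S #> a" using P23 yw a yc by (simp add: m_assoc)
      hence "S #> (a \<otimes> y \<otimes> inv w \<otimes> w) = S #> (a \<otimes> w)" using Pmult[of "a \<otimes> y \<otimes> inv w" a w] a yc by simp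
      hence "S #> (a \<otimes> y) = S #> (a \<otimes> w)" using a yc by (simp add: m_assoc)
      hence "y = w" using Uinj yw by blast
      hence s3one: "s3 = \<one>" using yw yc by simp
      hence "s1 = \<one>" using eq s2one c1 by simp
      thus ?thesis using s2one s3one by simp
    next
      case False
      have "S #> (a \<otimes> s2) = S #> \<one>"
      proof (cases "x2 = t")
        case True
        hence "z2 = \<one>" using False xz2 by auto
        thus ?thesis using True xz2 t Pone by simp
      next
        case False
        hence x2: "x2 = \<one>" "z2 = t" using \<open>x2 \<noteq> z2\<close> xz2 by auto
        have "S #> (t \<otimes> inv t) = S #> (a \<otimes> inv t)" using Pmult[of t a "inv t"] t a by simp
        thus ?thesis using x2 xz2 t by simp
      qed
      hence "S #> (a \<otimes> s2 \<otimes> s3) = S #> (\<one> \<otimes> s3)" using Pmult[of "a \<otimes> s2" "\<one>" s3] a c1 by simp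
      moreover have "s3 \<in> S" proof -
        have "y \<in> S" "w \<in> S" using yw U by auto
        thus ?thesis using yw(1) Smul Sinv by simp
      qed
      ultimately have "S #> (a \<otimes> s2 \<otimes> s3) = S" using P1 c1 by simp
      thus ?thesis using P23 Pa by simp
    qed
  qed
  show ?thesis unfolding TPP_def
  proof (intro conjI ballI)
    fix s1 s2 s3 assume s: "s1 \<in> quotient_set G H" "s2 \<in> quotient_set G {\<one>, t}" "s3 \<in> quotient_set G {\<one>, u, u \<otimes> u}"
    show "(s1 \<otimes> s2 \<otimes> s3 = \<one>) = (s1 = \<one> \<and> s2 = \<one> \<and> s3 = \<one>)"
      using core[OF s] by auto
  qed (use Hc oneH t Uc in auto)
qed

lemma cardH:
  assumes a: "a \<in> carrier G"
  shows "card {x \<in> carrier G. S #> (a \<otimes> x) = S #> a} = card S"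
proof -
  have eq: "{x \<in> carrier G. S #> (a \<otimes> x) = S #> a} = (\<lambda>s. inv a \<otimes> s \<otimes> a) ` S"
  proof (intro equalityI subsetI)
    fix x assume x: "x \<in> {x \<in> carrier G. S #> (a \<otimes> x) = S #> a}"
    hence xc: "x \<in> carrier G" by simp
    hence m1: "a \<otimes> x \<otimes> inv a \<in> S" using x Peq a by auto
    have "inv a \<otimes> (a \<otimes> x \<otimes> inv a) \<otimes> a = x \<otimes> inv a \<otimes> a"
      using a xc by (simp add: m_assoc[symmetric])
    moreover have "x \<otimes> inv a \<otimes> a = x" using a xc by (simp add: m_assoc)
    ultimately have "x = inv a \<otimes> (a \<otimes> x \<otimes> inv a) \<otimes> a" by simp
    with m1 show "x \<in> (\<lambda>s. inv a \<otimes> s \<otimes> a) ` S" by blast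
  next
    fix x assume "x \<in> (\<lambda>s. inv a \<otimes> s \<otimes> a) ` S"
    then obtain s where s: "s \<in> S" "x = inv a \<otimes> s \<otimes> a" by auto
    have sc: "s \<in> carrier G" using s Ssub by auto
    have "a \<otimes> x = s \<otimes> a" using s a sc by (simp add: m_assoc[symmetric])
    moreover have "S #> (s \<otimes> a) = S #> a" using Peq s sc a by (simp add: m_assoc)
    ultimately show "x \<in> {x \<in> carrier G. S #> (a \<otimes> x) = S #> a}" using s a sc by simp
  qed
  have inj: "inj_on (\<lambda>s. inv a \<otimes> s \<otimes> a) S"
  proof (rule inj_onI)
    fix s1 s2
    assume h: "s1 \<in> S" "s2 \<in> S" "inv a \<otimes> s1 \<otimes> a = inv a \<otimes> s2 \<otimes> a"
    have c: "s1 \<in> carrier G" "s2 \<in> carrier G" using h Ssub by auto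
    have "inv a \<otimes> s1 = inv a \<otimes> s2" using h(3) r_cancel[of a "inv a \<otimes> s1" "inv a \<otimes> s2"] a c by simp
    thus "s1 = s2" using l_cancel[of "inv a" s1 s2] a c by simp
  qed
  show ?thesis using eq card_image[OF inj] by simp
qed

lemma final_cap: "real (TPP_capacity G) \<ge> 3 / 2 * real (card (carrier G))"
proof -
  obtain a u where au: "a \<in> carrier G" "a \<notin> S" "u \<in> S" "S #> a \<noteq> S #> (a \<otimes> u)"
     "S #> a \<noteq> S #> (a \<otimes> (u \<otimes> u))" "S #> (a \<otimes> u) \<noteq> S #> (a \<otimes> (u \<otimes> u))"
    using three_cycle by blast
  obtain t where t: "t \<in> carrier G" "S #> (a \<otimes> t) = S" "S #> t = S #> a"
    using swap_el[OF au(1,2)] by blast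
  define H where "H = {x \<in> carrier G. S #> (a \<otimes> x) = S #> a}"
  have T: "TPP G H {\<one>, t} {\<one>, u, u \<otimes> u}"
    unfolding H_def by (rule tpp_main[OF au t])
  have cH: "card H = card S" unfolding H_def by (rule cardH[OF au(1)])
  have "S #> a \<noteq> S" using P1[OF au(1)] au(2) by simp
  hence "S #> t \<noteq> S #> \<one>" using t(3) Pone by simp
  hence "t \<noteq> \<one>" by auto
  hence cT: "card {\<one>, t} = 2" by simp
  have uc: "u \<in> carrier G" using au Ssub by auto
  have "u \<noteq> \<one>" "u \<otimes> u \<noteq> \<one>" "u \<noteq> u \<otimes> u" using au by auto
  hence cU: "card {\<one>, u, u \<otimes> u} = 3" by simp
  have re: "realizes G (card S) 2 3" unfolding realizes_def using T cH cT cU by blast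
  define M where "M = {n * p * m | n p m. realizes G n p m}"
  define N where "N = card (carrier G)"
  have "M \<subseteq> {..N * N * N}"
  proof
    fix k assume "k \<in> M"
    then obtain S1 S2 S3 where k: "k = card S1 * card S2 * card S3" "TPP G S1 S2 S3"
      unfolding M_def realizes_def by blast
    hence "card S1 \<le> N" "card S2 \<le> N" "card S3 \<le> N"
      unfolding TPP_def N_def using card_mono[OF fin] by auto
    hence "k \<le> N * N * N" using k(1) by (simp add: mult_le_mono)
    thus "k \<in> {..N * N * N}" by simp
  qed
  hence fM: "finite M" using finite_subset by blast
  have mem: "card S * 2 * 3 \<in> M" unfolding M_def using re by blast
  have "card S * 2 * 3 \<le> Max M" by (rule Max_ge[OF fM mem])
  hence ge: "card S * 6 \<le> TPP_capacity G" unfolding TPP_capacity_def M_def by simp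
  have "card (rcosets S) * card S = order G" using lagrange sub by blast
  hence ord: "card (carrier G) = 4 * card S" using c4 by (simp add: order_def)
  show ?thesis using ge ord by simp
qed

end

theorem mainTheorem5:
  fixes G :: "('a, 'b) monoid_scheme" and S :: "'a set"
  assumes "group G"
    and "finite (carrier G)"
    and "\<not> comm_group G"
    and "subgroup S G"
    and "normalizer G S = S"
    and "card (rcosets\<^bsub>G\<^esub> S) = 4"
  shows "real (TPP_capacity G) \<ge> 3 / 2 * real (card (carrier G))"
proof -
  have "tctx G S" using assms by (simp add: tctx_def tctx_axioms_def)
  thus ?thesis by (rule tctx.final_cap)
qed

end
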